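(* Assume (BC1)–(BC4) and (AC1), and fix $n\in\mathbb{Z}$ such that \[ K_n+J_n+|\mathcal G(n,n+1)|\gamma_n<1, \] where $K_n=\sum_{k<n}|\mathcal G(n,k+1)|\gamma_k\prod_{j=k}^{n-1}\frac{|A_j^{-1}|}{1-\gamma_j|A_j^{-1}|}$ and $J_n=\sum_{k>n}|\mathcal G(n,k+1)|\gamma_k\prod_{j=n}^{k-1}(|A_j|+\gamma_j)$. Then for every $\eta\in Y$ the map $\xi\mapsto H_n(\xi,\eta)$ is $C^1$.
   Context: $X,Y$ Banach spaces; $(A_n)_{n\in\mathbb{Z}}$ bounded invertible operators on $X$; $f_n\colon X\times Y\to X$; $g_n\colon Y\to Y$ homeomorphisms. $y(k,n,\eta)$ solves $y_{k+1}=g_k(y_k)$ with $y(n,n,\eta)=\eta$; $(x_2(k,n,\xi,\eta),y(k,n,\eta))$ solves $x_{k+1}=A_kx_k+f_k(x_k,y_k)$, $y_{k+1}=g_k(y_k)$ with value $(\xi,\eta)$ at $k=n$. $\mathcal A(m,n)=A_{m-1}\cdots A_n$ ($m>n$), $\mathrm{Id}$ ($m=n$), $A_m^{-1}\cdots A_{n-1}^{-1}$ ($m<n$). $(P_n)$ arbitrary bounded operators on $X$; $\mathcal G(m,n)=\mathcal A(m,n)P_n$ for $m\ge n$, $-\mathcal A(m,n)(\mathrm{Id}-P_n)$ for $m<n$. (BC1): $(\mu_n),(\gamma_n)\subset[0,\infty)$ with $|f_n(x,y)|\le\mu_n$, $|f_n(x_1,y)-f_n(x_2,y)|\le\gamma_n|x_1-x_2|$.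 (BC2): $\sup_m\sum_n|\mathcal G(m,n)|\mu_{n-1}<\infty$. (BC3): $\sup_m\sum_n|\mathcal G(m,n)|\gamma_{n-1}<1$. (BC4): $|A_n^{-1}|\gamma_n<1$ for all $n$. (AC1): for a fixed $r\ge1$, $x\mapsto f_n(x,y)$ is $C^r$ for all $n,y$. Under (BC1)–(BC4), with $\bar h_n(\xi,\eta)=-\sum_{k\in\mathbb{Z}}\mathcal G(n,k+1)f_k(x_2(k,n,\xi,\eta),y(k,n,\eta))$ and $\bar H_n(\xi,\eta)=(\xi+\bar h_n(\xi,\eta),\eta)$, it is known that $\bar H_n$ is a homeomorphism of $X\times Y$ whose inverse has the form $H_n(\xi,\eta)=(\xi+h_n(\xi,\eta),\eta)$ with $h_n$ continuous and bounded; $H_n$ maps solutions of $x_{k+1}=A_kx_k$, $y_{k+1}=g_k(y_k)$ to solutions of the coupled system. *)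

theory Defs
  imports "HOL-Analysis.Analysis"
begin

definition bl_invertible :: "('a::real_normed_vector \<Rightarrow>\<^sub>L 'a) \<Rightarrow> bool" where
  "bl_invertible T \<longleftrightarrow> (\<exists>S. T o\<^sub>L S = id_blinfun \<and> S o\<^sub>L T = id_blinfun)"

definition blinv :: "('a::real_normed_vector \<Rightarrow>\<^sub>L 'a) \<Rightarrow> ('a \<Rightarrow>\<^sub>L 'a)" where
  "blinv T = (THE S. T o\<^sub>L S = id_blinfun \<and> S o\<^sub>L T = id_blinfun)"

fun Aprod_fwd :: "(int \<Rightarrow> ('a::real_normed_vector \<Rightarrow>\<^sub>L 'a)) \<Rightarrow> nat \<Rightarrow> int \<Rightarrow> ('a \<Rightarrow>\<^sub>L 'a)" where
  "Aprod_fwd A 0 n = id_blinfun"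
| "Aprod_fwd A (Suc k) n = A (n + int k) o\<^sub>L Aprod_fwd A k n"

fun Aprod_bwd :: "(int \<Rightarrow> ('a::real_normed_vector \<Rightarrow>\<^sub>L 'a)) \<Rightarrow> nat \<Rightarrow> int \<Rightarrow> ('a \<Rightarrow>\<^sub>L 'a)" where
  "Aprod_bwd A 0 n = id_blinfun"
| "Aprod_bwd A (Suc k) n = blinv (A (n - int k - 1)) o\<^sub>L Aprod_bwd A k n"

text \<open>cocycle A m n = A_{m-1}...A_n (m>n), Id (m=n), A_m^{-1}...A_{n-1}^{-1} (m<n)\<close>
definition cocycle :: "(int \<Rightarrow> ('a::real_normed_vector \<Rightarrow>\<^sub>L 'a)) \<Rightarrow> int \<Rightarrow> int \<Rightarrow> ('a \<Rightarrow>\<^sub>L 'a)" where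
  "cocycle A m n = (if n \<le> m then Aprod_fwd A (nat (m - n)) n else Aprod_bwd A (nat (n - m)) n)"

definition green :: "(int \<Rightarrow> ('a::real_normed_vector \<Rightarrow>\<^sub>L 'a)) \<Rightarrow> (int \<Rightarrow> ('a \<Rightarrow>\<^sub>L 'a)) \<Rightarrow> int \<Rightarrow> int \<Rightarrow> ('a \<Rightarrow>\<^sub>L 'a)" where
  "green A P m n = (if n \<le> m then cocycle A m n o\<^sub>L P n
                    else - (cocycle A m n o\<^sub>L (id_blinfun - P n)))"

fun orbit_fwd :: "(int \<Rightarrow> 'c \<Rightarrow> 'c) \<Rightarrow> nat \<Rightarrow> int \<Rightarrow> 'c \<Rightarrow> 'c" where
  "orbit_fwd F 0 n z = z"
| "orbit_fwd F (Suc j) n z = F (n + int j) (orbit_fwd F j n z)"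

fun orbit_bwd :: "(int \<Rightarrow> 'c \<Rightarrow> 'c) \<Rightarrow> nat \<Rightarrow> int \<Rightarrow> 'c \<Rightarrow> 'c" where
  "orbit_bwd F 0 n z = z"
| "orbit_bwd F (Suc j) n z = inv (F (n - int j - 1)) (orbit_bwd F j n z)"

text \<open>orbit F k n z: value at time k of the solution with value z at time n\<close>
definition orbit :: "(int \<Rightarrow> 'c \<Rightarrow> 'c) \<Rightarrow> int \<Rightarrow> int \<Rightarrow> 'c \<Rightarrow> 'c" where
  "orbit F k n z = (if n \<le> k then orbit_fwd F (nat (k - n)) n z else orbit_bwd F (nat (n - k)) n z)"

definition coupled_step ::
  "(int \<Rightarrow> ('a::real_normed_vector \<Rightarrow>\<^sub>L 'a)) \<Rightarrow> (int \<Rightarrow> 'a \<Rightarrow> 'b \<Rightarrow> 'a) \<Rightarrow> (int \<Rightarrow> 'b \<Rightarrow> 'b)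
     \<Rightarrow> int \<Rightarrow> 'a \<times> 'b \<Rightarrow> 'a \<times> 'b" where
  "coupled_step A f g k = (\<lambda>(x, y). (A k x + f k x y, g k y))"

definition ysol :: "(int \<Rightarrow> 'b \<Rightarrow> 'b) \<Rightarrow> int \<Rightarrow> int \<Rightarrow> 'b \<Rightarrow> 'b" where
  "ysol g k n \<eta> = orbit g k n \<eta>"

definition x2sol ::
  "(int \<Rightarrow> ('a::real_normed_vector \<Rightarrow>\<^sub>L 'a)) \<Rightarrow> (int \<Rightarrow> 'a \<Rightarrow> 'b \<Rightarrow> 'a) \<Rightarrow> (int \<Rightarrow> 'b \<Rightarrow> 'b)
     \<Rightarrow> int \<Rightarrow> int \<Rightarrow> 'a \<Rightarrow> 'b \<Rightarrow> 'a" where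
  "x2sol A f g k n \<xi> \<eta> = fst (orbit (coupled_step A f g) k n (\<xi>, \<eta>))"

definition hbar ::
  "(int \<Rightarrow> ('a::banach \<Rightarrow>\<^sub>L 'a)) \<Rightarrow> (int \<Rightarrow> ('a \<Rightarrow>\<^sub>L 'a)) \<Rightarrow> (int \<Rightarrow> 'a \<Rightarrow> 'b \<Rightarrow> 'a)
     \<Rightarrow> (int \<Rightarrow> 'b \<Rightarrow> 'b) \<Rightarrow> int \<Rightarrow> 'a \<times> 'b \<Rightarrow> 'a" where
  "hbar A P f g n = (\<lambda>(\<xi>, \<eta>).
      - (\<Sum>\<^sub>\<infinity>k\<in>(UNIV::int set).
           green A P n (k + 1) (f k (x2sol A f g k n \<xi> \<eta>) (ysol g k n \<eta>))))"

definition Hbar ::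
  "(int \<Rightarrow> ('a::banach \<Rightarrow>\<^sub>L 'a)) \<Rightarrow> (int \<Rightarrow> ('a \<Rightarrow>\<^sub>L 'a)) \<Rightarrow> (int \<Rightarrow> 'a \<Rightarrow> 'b \<Rightarrow> 'a)
     \<Rightarrow> (int \<Rightarrow> 'b \<Rightarrow> 'b) \<Rightarrow> int \<Rightarrow> 'a \<times> 'b \<Rightarrow> 'a \<times> 'b" where
  "Hbar A P f g n = (\<lambda>(\<xi>, \<eta>). (\<xi> + hbar A P f g n (\<xi>, \<eta>), \<eta>))"

definition Hconj ::
  "(int \<Rightarrow> ('a::banach \<Rightarrow>\<^sub>L 'a)) \<Rightarrow> (int \<Rightarrow> ('a \<Rightarrow>\<^sub>L 'a)) \<Rightarrow> (int \<Rightarrow> 'a \<Rightarrow> 'b \<Rightarrow> 'a)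
     \<Rightarrow> (int \<Rightarrow> 'b \<Rightarrow> 'b) \<Rightarrow> int \<Rightarrow> 'a \<times> 'b \<Rightarrow> 'a \<times> 'b" where
  "Hconj A P f g n = inv (Hbar A P f g n)"

definition C1_map :: "('a::real_normed_vector \<Rightarrow> 'c::real_normed_vector) \<Rightarrow> bool" where
  "C1_map F \<longleftrightarrow> (\<exists>D :: 'a \<Rightarrow> ('a \<Rightarrow>\<^sub>L 'c).
      (\<forall>x. (F has_derivative blinfun_apply (D x)) (at x)) \<and> continuous_on UNIV D)"

section \<open>The constants K_n and J_n (extended nonnegative reals, so divergence is +infinity)\<close>

definition Kconst :: "(int \<Rightarrow> ('a::real_normed_vector \<Rightarrow>\<^sub>L 'a)) \<Rightarrow> (int \<Rightarrow> ('a \<Rightarrow>\<^sub>L 'a)) \<Rightarrow> (int \<Rightarrow> real) \<Rightarrow> int \<Rightarrow> ennreal" where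
  "Kconst A P \<gamma> n = (\<Sum>\<^sub>\<infinity>k\<in>{..<n}. ennreal (norm (green A P n (k + 1)) * \<gamma> k *
      (\<Prod>j\<in>{k..<n}. norm (blinv (A j)) / (1 - \<gamma> j * norm (blinv (A j))))))"

definition Jconst :: "(int \<Rightarrow> ('a::real_normed_vector \<Rightarrow>\<^sub>L 'a)) \<Rightarrow> (int \<Rightarrow> ('a \<Rightarrow>\<^sub>L 'a)) \<Rightarrow> (int \<Rightarrow> real) \<Rightarrow> int \<Rightarrow> ennreal" where
  "Jconst A P \<gamma> n = (\<Sum>\<^sub>\<infinity>k\<in>{n<..}. ennreal (norm (green A P n (k + 1)) * \<gamma> k *
      (\<Prod>j\<in>{n..<k}. norm (A j) + \<gamma> j)))"

end

theory Submission
  imports Defs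
begin


lemma blinv_props:
  assumes "bl_invertible T"
  shows "T o\<^sub>L blinv T = id_blinfun" "blinv T o\<^sub>L T = id_blinfun"
proof -
  obtain S where S: "T o\<^sub>L S = id_blinfun" "S o\<^sub>L T = id_blinfun"
    using assms unfolding bl_invertible_def by blast
  have u: "S' = S" if "T o\<^sub>L S' = id_blinfun \<and> S' o\<^sub>L T = id_blinfun" for S'
  proof -
    have "S' = S' o\<^sub>L (T o\<^sub>L S)" using S by (intro blinfun_eqI) simp
    also have "\<dots> = (S' o\<^sub>L T) o\<^sub>L S" by (intro blinfun_eqI) simp
    also have "\<dots> = S" using that by (intro blinfun_eqI) simp
    finally show ?thesis .
  qed
  have "blinv T = S" unfolding blinv_def
    by (rule the_equality) (use S u in blast)+
  then show "T o\<^sub>L blinv T = id_blinfun" "blinv T o\<^sub>L T = id_blinfun" using S by auto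
qed

lemma blinv_apply:
  assumes "bl_invertible T"
  shows "T (blinv T x) = x" "blinv T (T x) = x"
  using arg_cong[OF blinv_props(1)[OF assms], of "\<lambda>T. blinfun_apply T x"]
    arg_cong[OF blinv_props(2)[OF assms], of "\<lambda>T. blinfun_apply T x"] by simp_all

lemma diff_diff_self: "(a::'a::ab_group_add) - (a - b) = b" by simp

lemma deriv_lip_bound:
  fixes f :: "'a::real_normed_vector \<Rightarrow> 'b::real_normed_vector"
  assumes d: "(f has_derivative blinfun_apply D) (at x)"
    and L: "\<And>x1 x2. norm (f x1 - f x2) \<le> L * norm (x1 - x2)" and L0: "0 \<le> L"
  shows "norm D \<le> L"
proof (rule norm_blinfun_bound[OF L0])
  fix v
  show "norm (D v) \<le> L * norm v"
  proof (cases "v = 0")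
    case True then show ?thesis by (simp add: blinfun.zero_right)
  next
    case False
    have *: "norm (D v) \<le> L * norm v + e * norm v" if e: "e > 0" for e
    proof -
      obtain d where d0: "d > 0" and dd: "\<And>y. norm (y - x) < d \<Longrightarrow> norm (f y - f x - D (y - x)) \<le> e * norm (y - x)"
        using d e unfolding has_derivative_at_alt by blast
      define t where "t = d / (2 * norm v)"
      have t0: "t > 0" using d0 False by (simp add: t_def)
      have "norm (t *\<^sub>R v) < d" using d0 False by (simp add: t_def)
      then have "norm (f (x + t *\<^sub>R v) - f x - D (t *\<^sub>R v)) \<le> e * norm (t *\<^sub>R v)"
        using dd[of "x + t *\<^sub>R v"] by simp
      moreover have "norm (f (x + t *\<^sub>R v) - f x) \<le> L * norm (t *\<^sub>R v)"
        using L[of "x + t *\<^sub>R v" x] by simp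
      moreover have "norm (D (t *\<^sub>R v)) \<le> norm (f (x + t *\<^sub>R v) - f x) + norm (f (x + t *\<^sub>R v) - f x - D (t *\<^sub>R v))"
        using norm_triangle_ineq4[of "f (x + t *\<^sub>R v) - f x" "f (x + t *\<^sub>R v) - f x - D (t *\<^sub>R v)"]
        by (simp only: diff_diff_self)
      ultimately have ineq: "norm (D (t *\<^sub>R v)) \<le> L * norm (t *\<^sub>R v) + e * norm (t *\<^sub>R v)"
        by linarith
      have eq1: "norm (D (t *\<^sub>R v)) = t * norm (D v)" and eq2: "norm (t *\<^sub>R v) = t * norm v"
        using t0 by (simp_all add: blinfun.scaleR_right)
      from ineq have "t * norm (D v) \<le> L * (t * norm v) + e * (t * norm v)"
        unfolding eq1 eq2 .
      also have "\<dots> = t * (L * norm v + e * norm v)" by (simp add: algebra_simps)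
      finally have "t * norm (D v) \<le> t * (L * norm v + e * norm v)" .
      then show ?thesis using t0 by (rule mult_left_le_imp_le)
    qed
    show ?thesis
    proof (rule field_le_epsilon)
      fix e :: real assume "e > 0"
      then have "e / norm v > 0" using False by simp
      have "e / norm v * norm v = e" using False by simp
      with *[OF \<open>e / norm v > 0\<close>] show "norm (D v) \<le> L * norm v + e" by linarith
    qed
  qed
qed


lemma blinv_eq:
  assumes "T o\<^sub>L S = id_blinfun" "S o\<^sub>L T = id_blinfun"
  shows "bl_invertible T" "blinv T = S"
proof -
  show inv: "bl_invertible T" using assms unfolding bl_invertible_def by blast
  have u: "S' = S" if "T o\<^sub>L S' = id_blinfun \<and> S' o\<^sub>L T = id_blinfun" for S'
  proof -
    have "S' = S' o\<^sub>L (T o\<^sub>L S)" using assms by (intro blinfun_eqI) simp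
    also have "\<dots> = (S' o\<^sub>L T) o\<^sub>L S" by (intro blinfun_eqI) simp
    also have "\<dots> = S" using that by (intro blinfun_eqI) simp
    finally show ?thesis .
  qed
  show "blinv T = S" unfolding blinv_def
    by (rule the_equality) (use assms u in blast)+
qed

lemma pert_lower:
  fixes h :: "'a::real_normed_vector \<Rightarrow> 'a"
  assumes c: "c < 1" and lip: "\<And>x y. norm (h x - h y) \<le> c * norm (x - y)"
  shows "norm (x - y) \<le> norm ((x + h x) - (y + h y)) / (1 - c)"
proof -
  have "norm (x - y) = norm (((x + h x) - (y + h y)) - (h x - h y))" by (simp add: algebra_simps)
  also have "\<dots> \<le> norm ((x + h x) - (y + h y)) + norm (h x - h y)" by (rule norm_triangle_ineq4)
  also have "\<dots> \<le> norm ((x + h x) - (y + h y)) + c * norm (x - y)" using lip by simp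
  finally have "(1 - c) * norm (x - y) \<le> norm ((x + h x) - (y + h y))" by (simp add: algebra_simps)
  then show ?thesis using c by (simp add: field_simps)
qed

lemma pert_bij:
  fixes h :: "'a::banach \<Rightarrow> 'a"
  assumes c: "0 \<le> c" "c < 1" and lip: "\<And>x y. norm (h x - h y) \<le> c * norm (x - y)"
  shows "bij (\<lambda>x. x + h x)"
proof (rule bijI)
  show "inj (\<lambda>x. x + h x)"
  proof (rule injI)
    fix x y assume "x + h x = y + h y"
    then have "norm (x - y) \<le> 0" using pert_lower[OF c(2) lip, of x y] by simp
    then show "x = y" by simp
  qed
  show "surj (\<lambda>x. x + h x)"
  proof (rule surjI)
    fix z
    have "\<exists>!x. (\<lambda>x. z - h x) x = x"
    proof (rule banach_fix_type[OF c])
      show "\<forall>x y. dist ((\<lambda>x. z - h x) x) ((\<lambda>x. z - h x) y) \<le> c * dist x y"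
        using lip by (simp add: dist_norm norm_minus_commute)
    qed
    then obtain x where "z - h x = x" by blast
    then have "x + h x = z" by (simp add: algebra_simps)
    then show "(\<lambda>x. x + h x) (SOME x. x + h x = z) = z" by (rule someI)
  qed
qed

lemma pert_inv:
  fixes h :: "'a::banach \<Rightarrow> 'a"
  assumes c: "0 \<le> c" "c < 1" and lip: "\<And>x y. norm (h x - h y) \<le> c * norm (x - y)"
  defines "G \<equiv> inv (\<lambda>x. x + h x)"
  shows "\<And>u. G u + h (G u) = u" "\<And>x. G (x + h x) = x"
    "\<And>u v. norm (G u - G v) \<le> norm (u - v) / (1 - c)"
proof -
  have b: "bij (\<lambda>x. x + h x)" by (rule pert_bij[OF c lip])
  show 1: "G u + h (G u) = u" for u
    using bij_inv_eq_iff[OF b] unfolding G_def by metis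
  show "G (x + h x) = x" for x
    using bij_inv_eq_iff[OF b] unfolding G_def by metis
  show "norm (G u - G v) \<le> norm (u - v) / (1 - c)" for u v
    using pert_lower[OF c(2) lip, of "G u" "G v"] 1[of u] 1[of v] by simp
qed

lemma inv_pert_blinfun:
  fixes L :: "'a::banach \<Rightarrow>\<^sub>L 'a"
  assumes c: "norm L \<le> c" "c < 1"
  shows "bl_invertible (id_blinfun + L)"
    "norm (blinv (id_blinfun + L)) \<le> 1 / (1 - c)"
    "(id_blinfun + L) o\<^sub>L blinv (id_blinfun + L) = id_blinfun"
    "blinv (id_blinfun + L) o\<^sub>L (id_blinfun + L) = id_blinfun"
proof -
  have c0: "0 \<le> c" using c(1) norm_ge_zero order_trans by blast
  have lip: "norm (L x - L y) \<le> c * norm (x - y)" for x y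
    by (metis blinfun.diff_right c(1) mult_right_mono norm_blinfun norm_ge_zero order_trans)
  define G where "G = inv (\<lambda>x. x + L x)"
  note G = pert_inv[OF c0 c(2) lip, folded G_def]
  have G0: "G 0 = 0" using G(2)[of 0] by simp
  have Gadd: "G (u + v) = G u + G v" for u v
  proof -
    have "G (u + v) = G ((G u + G v) + L (G u + G v))"
      using G(1)[of u] G(1)[of v] by (simp add: blinfun.add_right algebra_simps)
    then show ?thesis using G(2) by simp
  qed
  have Gscale: "G (r *\<^sub>R u) = r *\<^sub>R G u" for r u
  proof -
    have "G (r *\<^sub>R u) = G (r *\<^sub>R G u + L (r *\<^sub>R G u))"
      using G(1)[of u] by (simp add: blinfun.scaleR_right flip: scaleR_right_distrib)
    then show ?thesis using G(2) by simp
  qed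
  have Gb: "norm (G u) \<le> norm u * (1 / (1 - c))" for u
    using G(3)[of u 0] G0 by simp
  have bl: "bounded_linear G"
    by (rule bounded_linear_intro[OF Gadd Gscale Gb])
  define S where "S = Blinfun G"
  have S: "blinfun_apply S = G" unfolding S_def by (rule bounded_linear_Blinfun_apply[OF bl])
  have 1: "(id_blinfun + L) o\<^sub>L S = id_blinfun"
    by (rule blinfun_eqI) (simp add: S blinfun.add_left G(1))
  have 2: "S o\<^sub>L (id_blinfun + L) = id_blinfun"
    by (rule blinfun_eqI) (simp add: S blinfun.add_left G(2))
  show "bl_invertible (id_blinfun + L)" using blinv_eq[OF 1 2] by simp
  have e: "blinv (id_blinfun + L) = S" using blinv_eq[OF 1 2] by simp
  show "norm (blinv (id_blinfun + L)) \<le> 1 / (1 - c)"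
    unfolding e
  proof (rule norm_blinfun_bound)
    show "0 \<le> 1 / (1 - c)" using c by simp
    fix x show "norm (S x) \<le> 1 / (1 - c) * norm x" by (metis Gb S mult.commute)
  qed
  show "(id_blinfun + L) o\<^sub>L blinv (id_blinfun + L) = id_blinfun" using 1 e by simp
  show "blinv (id_blinfun + L) o\<^sub>L (id_blinfun + L) = id_blinfun" using 2 e by simp
qed

lemma inv_pert_lip:
  fixes L1 L2 :: "'a::banach \<Rightarrow>\<^sub>L 'a"
  assumes c: "norm L1 \<le> c" "norm L2 \<le> c" "c < 1"
  shows "norm (blinv (id_blinfun + L1) - blinv (id_blinfun + L2)) \<le> (1 / (1 - c))\<^sup>2 * norm (L1 - L2)"
proof -
  define S1 where "S1 = blinv (id_blinfun + L1)"
  define S2 where "S2 = blinv (id_blinfun + L2)"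
  note I1 = inv_pert_blinfun[OF c(1) c(3), folded S1_def]
  note I2 = inv_pert_blinfun[OF c(2) c(3), folded S2_def]
  have "S1 - S2 = S1 o\<^sub>L (L2 - L1) o\<^sub>L S2"
  proof (rule blinfun_eqI)
    fix v
    have a: "S1 (S2 v + L1 (S2 v)) = S2 v"
      using arg_cong[OF I1(4), of "\<lambda>T. T (S2 v)"] by (simp add: blinfun.add_left)
    have b: "S2 v + L2 (S2 v) = v"
      using arg_cong[OF I2(3), of "\<lambda>T. T v"] by (simp add: blinfun.add_left)
    have "S1 v - S2 v = S1 (S2 v + L2 (S2 v)) - S1 (S2 v + L1 (S2 v))" using a b by simp
    also have "\<dots> = S1 (L2 (S2 v) - L1 (S2 v))" by (simp add: blinfun.diff_right blinfun.add_right)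
    finally show "(S1 - S2) v = (S1 o\<^sub>L (L2 - L1) o\<^sub>L S2) v" by (simp add: blinfun.diff_left)
  qed
  then have "norm (S1 - S2) \<le> norm (S1 o\<^sub>L (L2 - L1)) * norm S2"
    by (simp only: norm_blinfun_compose)
  also have "\<dots> \<le> norm S1 * norm (L2 - L1) * norm S2"
    by (intro mult_right_mono norm_blinfun_compose norm_ge_zero)
  also have "\<dots> \<le> (1 / (1 - c)) * norm (L2 - L1) * (1 / (1 - c))"
    using I1(2) I2(2) c by (intro mult_mono) auto
  finally show ?thesis unfolding S1_def S2_def by (simp add: power2_eq_square norm_minus_commute mult_ac)
qed


lemma lip_from_deriv:
  fixes h :: "'a::real_normed_vector \<Rightarrow> 'b::real_normed_vector"
  assumes dh: "\<And>x. (h has_derivative blinfun_apply (Dh x)) (at x)" and nDh: "\<And>x. norm (Dh x) \<le> c"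
  shows "norm (h x - h y) \<le> c * norm (x - y)"
proof (rule differentiable_bound[where S=UNIV and f'="\<lambda>x. blinfun_apply (Dh x)"])
  show "convex (UNIV::'a set)" by simp
  show "\<And>x. x \<in> UNIV \<Longrightarrow> (h has_derivative blinfun_apply (Dh x)) (at x within UNIV)" using dh by simp
  show "\<And>x. x \<in> UNIV \<Longrightarrow> onorm (blinfun_apply (Dh x)) \<le> c" using nDh by (simp add: norm_blinfun.rep_eq[symmetric])
qed auto

lemma pert_deriv:
  fixes h :: "'a::banach \<Rightarrow> 'a" and Dh :: "'a \<Rightarrow> ('a \<Rightarrow>\<^sub>L 'a)"
  assumes c: "c < 1" and dh: "\<And>x. (h has_derivative blinfun_apply (Dh x)) (at x)"
    and nDh: "\<And>x. norm (Dh x) \<le> c" and cont: "continuous_on UNIV Dh"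
  defines "G \<equiv> inv (\<lambda>x. x + h x)"
  shows "\<And>z. (G has_derivative blinfun_apply (blinv (id_blinfun + Dh (G z)))) (at z)"
    and "continuous_on UNIV (\<lambda>z. blinv (id_blinfun + Dh (G z)))"
    and "\<And>z. norm (blinv (id_blinfun + Dh (G z))) \<le> 1 / (1 - c)"
    and "\<And>u. G u + h (G u) = u" "\<And>x. G (x + h x) = x"
proof -
  have c0: "0 \<le> c" using nDh[of 0] norm_ge_zero order_trans by blast
  have lip: "norm (h x - h y) \<le> c * norm (x - y)" for x y by (rule lip_from_deriv[OF dh nDh])
  note G = pert_inv[OF c0 c lip, folded G_def]
  show "\<And>u. G u + h (G u) = u" "\<And>x. G (x + h x) = x" using G by auto
  have Glip: "(1 / (1 - c))-lipschitz_on UNIV G"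
    by (rule lipschitz_onI) (use G(3) c in \<open>auto simp: dist_norm\<close>)
  have Gcont: "continuous_on UNIV G" by (rule lipschitz_on_continuous_on[OF Glip])
  show nb: "norm (blinv (id_blinfun + Dh (G z))) \<le> 1 / (1 - c)" for z
    using inv_pert_blinfun(2)[OF nDh c] .
  show "(G has_derivative blinfun_apply (blinv (id_blinfun + Dh (G z)))) (at z)" for z
  proof (rule has_derivative_inverse_basic[where f="\<lambda>x. x + h x" and f'="\<lambda>v. v + Dh (G z) v" and T=UNIV])
    show "((\<lambda>x. x + h x) has_derivative (\<lambda>v. v + blinfun_apply (Dh (G z)) v)) (at (G z))"
      by (rule has_derivative_add[OF has_derivative_ident dh])
    show "bounded_linear (blinfun_apply (blinv (id_blinfun + Dh (G z))))" by (rule blinfun.bounded_linear_right)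
    show "blinfun_apply (blinv (id_blinfun + Dh (G z))) \<circ> (\<lambda>v. v + blinfun_apply (Dh (G z)) v) = id"
    proof
      fix v
      show "(blinfun_apply (blinv (id_blinfun + Dh (G z))) \<circ> (\<lambda>v. v + blinfun_apply (Dh (G z)) v)) v = id v"
        using arg_cong[OF inv_pert_blinfun(4)[OF nDh c], of "\<lambda>T. blinfun_apply T v"]
        by (simp add: blinfun.add_left)
    qed
    show "continuous (at z) G" using Gcont by (simp add: continuous_on_eq_continuous_at)
  qed (use G in auto)
  have F: "continuous_on {L. norm L \<le> c} (\<lambda>L::'a\<Rightarrow>\<^sub>L'a. blinv (id_blinfun + L))"
  proof (rule lipschitz_on_continuous_on)
    show "((1 / (1 - c))\<^sup>2)-lipschitz_on {L. norm L \<le> c} (\<lambda>L::'a\<Rightarrow>\<^sub>L'a. blinv (id_blinfun + L))"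
      by (rule lipschitz_onI) (use inv_pert_lip c in \<open>auto simp: dist_norm\<close>)
  qed
  have DG: "continuous_on UNIV (\<lambda>z. Dh (G z))"
    by (rule continuous_on_compose2[OF cont Gcont]) auto
  show "continuous_on UNIV (\<lambda>z. blinv (id_blinfun + Dh (G z)))"
    by (rule continuous_on_compose2[OF F DG]) (use nDh in auto)
qed


lemma ennreal_infsum_finite:
  fixes f :: "'i \<Rightarrow> real"
  assumes nn: "\<And>x. 0 \<le> f x" and fin: "(\<Sum>\<^sub>\<infinity>x\<in>A. ennreal (f x)) < top"
  shows "f summable_on A" "ennreal (infsum f A) = (\<Sum>\<^sub>\<infinity>x\<in>A. ennreal (f x))"
proof -
  have se: "sum (\<lambda>x. ennreal (f x)) F = ennreal (sum f F)" for F
    using nn by (simp add: sum_ennreal)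
  have SUPe: "(\<Sum>\<^sub>\<infinity>x\<in>A. ennreal (f x)) = (SUP F\<in>{F. finite F \<and> F\<subseteq>A}. ennreal (sum f F))"
    by (subst nonneg_infsum_complete) (auto simp: se)
  have le: "ennreal (sum f F) \<le> (\<Sum>\<^sub>\<infinity>x\<in>A. ennreal (f x))" if "finite F" "F \<subseteq> A" for F
    unfolding SUPe using that by (intro SUP_upper) auto
  show s: "f summable_on A"
  proof (rule nonneg_bdd_above_summable_on)
    show "\<And>x. x \<in> A \<Longrightarrow> 0 \<le> f x" using nn by simp
    show "bdd_above (sum f ` {F. F \<subseteq> A \<and> finite F})"
    proof (rule bdd_aboveI2)
      fix F assume "F \<in> {F. F \<subseteq> A \<and> finite F}"
      then have "ennreal (sum f F) \<le> (\<Sum>\<^sub>\<infinity>x\<in>A. ennreal (f x))" using le by auto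
      then show "sum f F \<le> enn2real (\<Sum>\<^sub>\<infinity>x\<in>A. ennreal (f x))"
        using fin by (metis enn2real_ennreal enn2real_mono less_top sum_nonneg nn)
    qed
  qed
  show "ennreal (infsum f A) = (\<Sum>\<^sub>\<infinity>x\<in>A. ennreal (f x))"
    unfolding SUPe by (rule infsum_nonneg_is_SUPREMUM_ennreal[OF s]) (use nn in auto)
qed

lemma int_exhaust_filterlim:
  "filterlim (\<lambda>N::nat. {-int N..int N}) (finite_subsets_at_top (UNIV::int set)) sequentially"
  unfolding filterlim_finite_subsets_at_top
proof (intro allI impI)
  fix X :: "int set" assume X: "finite X \<and> X \<subseteq> UNIV"
  then obtain M where M: "\<And>x. x \<in> X \<Longrightarrow> \<bar>x\<bar> \<le> M"
    by (metis finite_nat_set_iff_bounded_le finite_imageI abs_ge_zero imageI nat_le_iff) 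
  show "\<forall>\<^sub>F y in sequentially. finite {- int y..int y} \<and> X \<subseteq> {- int y..int y} \<and> {- int y..int y} \<subseteq> UNIV"
    unfolding eventually_sequentially
  proof (intro exI[of _ "nat M"] allI impI)
    fix N assume "nat M \<le> N"
    then have "M \<le> int N" by linarith
    then show "finite {- int N..int N} \<and> X \<subseteq> {- int N..int N} \<and> {- int N..int N} \<subseteq> UNIV"
      using M by force
  qed
qed

lemma int_exhaust_tendsto:
  fixes f :: "int \<Rightarrow> 'c::{topological_comm_monoid_add, t2_space}"
  assumes "f summable_on UNIV"
  shows "(\<lambda>N::nat. sum f {-int N..int N}) \<longlonglongrightarrow> infsum f UNIV"
proof -
  have "(sum f \<longlongrightarrow> infsum f UNIV) (finite_subsets_at_top UNIV)"
    using has_sum_infsum[OF assms] unfolding has_sum_def .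
  then show ?thesis using filterlim_compose[OF _ int_exhaust_filterlim] by blast
qed

lemma tail_bound:
  fixes u :: "int \<Rightarrow> 'c::banach" and b :: "int \<Rightarrow> real"
  assumes ub: "\<And>k. norm (u k) \<le> b k" and bs: "b summable_on UNIV" and F: "finite F"
  shows "u summable_on UNIV" "norm (infsum u UNIV - sum u F) \<le> infsum b UNIV - sum b F"
proof -
  have bn: "\<And>k. 0 \<le> b k" using ub norm_ge_zero order_trans by blast
  have nus: "(\<lambda>k. norm (u k)) summable_on A" for A
    by (rule summable_on_comparison_test[OF summable_on_subset_banach[OF bs subset_UNIV]]) (use ub in auto)
  have us: "u summable_on A" for A by (rule abs_summable_summable[OF nus])
  show "u summable_on UNIV" by (rule us)
  have bsA: "b summable_on A" for A by (rule summable_on_subset_banach[OF bs subset_UNIV])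
  have "infsum u UNIV = infsum u (F \<union> (UNIV - F))" by simp
  also have "\<dots> = infsum u F + infsum u (UNIV - F)" by (rule infsum_Un_disjoint[OF us us]) auto
  finally have eu: "infsum u UNIV - sum u F = infsum u (UNIV - F)" using F by simp
  have "infsum b UNIV = infsum b (F \<union> (UNIV - F))" by simp
  also have "\<dots> = infsum b F + infsum b (UNIV - F)" by (rule infsum_Un_disjoint[OF bsA bsA]) auto
  finally have eb: "infsum b UNIV - sum b F = infsum b (UNIV - F)" using F by simp
  show "norm (infsum u UNIV - sum u F) \<le> infsum b UNIV - sum b F"
    unfolding eu eb by (rule norm_infsum_le[OF has_sum_infsum[OF us] has_sum_infsum[OF bsA]]) (use ub in auto)
qed

lemma tail_to_zero:
  fixes b :: "int \<Rightarrow> real"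
  assumes bs: "b summable_on UNIV"
  shows "\<forall>e>0. \<forall>\<^sub>F N in sequentially. infsum b UNIV - sum b {-int N..int N} < e"
proof (intro allI impI)
  fix e :: real assume e: "e > 0"
  have "(\<lambda>N. sum b {-int N..int N}) \<longlonglongrightarrow> infsum b UNIV" by (rule int_exhaust_tendsto[OF bs])
  then have "\<forall>\<^sub>F N in sequentially. dist (sum b {-int N..int N}) (infsum b UNIV) < e"
    using e by (rule tendstoD)
  then show "\<forall>\<^sub>F N in sequentially. infsum b UNIV - sum b {-int N..int N} < e"
    by eventually_elim (simp add: dist_real_def)
qed

lemma series_deriv:
  fixes t :: "int \<Rightarrow> 'a::banach \<Rightarrow> 'c::banach" and Dt :: "int \<Rightarrow> 'a \<Rightarrow> ('a \<Rightarrow>\<^sub>L 'c)"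
  assumes d: "\<And>k x. (t k has_derivative blinfun_apply (Dt k x)) (at x)"
    and tb: "\<And>k x. norm (t k x) \<le> M k" and Ms: "M summable_on UNIV"
    and Db: "\<And>k x. norm (Dt k x) \<le> b k" and bs: "b summable_on UNIV"
    and cont: "\<And>k. continuous_on UNIV (Dt k)"
  shows "\<And>x. ((\<lambda>x. infsum (\<lambda>k. t k x) UNIV) has_derivative blinfun_apply (infsum (\<lambda>k. Dt k x) UNIV)) (at x)"
    and "continuous_on UNIV (\<lambda>x. infsum (\<lambda>k. Dt k x) UNIV)"
    and "\<And>x. norm (infsum (\<lambda>k. Dt k x) UNIV) \<le> infsum b UNIV"
proof -
  define I where "I N = {-int N..int N}" for N :: nat
  have fI: "finite (I N)" for N unfolding I_def by simp
  have tl: "norm (infsum (\<lambda>k. Dt k x) UNIV - sum (\<lambda>k. Dt k x) (I N)) \<le> infsum b UNIV - sum b (I N)" for x N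
    by (rule tail_bound(2)[OF Db bs fI])
  have tz: "\<forall>\<^sub>F N in sequentially. infsum b UNIV - sum b (I N) < e" if "e > 0" for e
    using tail_to_zero[OF bs] that unfolding I_def by blast
  have tlim: "(\<lambda>N. sum (\<lambda>k. t k x) (I N)) \<longlonglongrightarrow> infsum (\<lambda>k. t k x) UNIV" for x
    unfolding I_def by (rule int_exhaust_tendsto[OF tail_bound(1)[OF tb Ms finite.emptyI]])
  show "norm (infsum (\<lambda>k. Dt k x) UNIV) \<le> infsum b UNIV" for x
    by (rule norm_infsum_le[OF has_sum_infsum[OF tail_bound(1)[OF Db bs finite.emptyI]] has_sum_infsum[OF bs]])
      (use Db in auto)
  have "\<exists>g. \<forall>x\<in>UNIV. (\<lambda>N. sum (\<lambda>k. t k x) (I N)) \<longlonglongrightarrow> g x \<and>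
           (g has_derivative blinfun_apply (infsum (\<lambda>k. Dt k x) UNIV)) (at x within UNIV)"
  proof (rule has_derivative_sequence[where f'="\<lambda>N x h. sum (\<lambda>k. Dt k x h) (I N)" and ?x0.0=0])
    show "convex (UNIV :: 'a set)" by simp
    show "((\<lambda>x. sum (\<lambda>k. t k x) (I N)) has_derivative (\<lambda>h. sum (\<lambda>k. Dt k x h) (I N))) (at x within UNIV)" for N x
      using d by (auto intro!: has_derivative_sum)
    show "\<forall>\<^sub>F N in sequentially. \<forall>x\<in>UNIV. \<forall>h. norm (sum (\<lambda>k. Dt k x h) (I N) - infsum (\<lambda>k. Dt k x) UNIV h) \<le> e * norm h"
      if e: "e > 0" for e
      using tz[OF e]
    proof eventually_elim
      case (elim N)
      show ?case
      proof (intro ballI allI)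
        fix x h
        have "sum (\<lambda>k. Dt k x h) (I N) - infsum (\<lambda>k. Dt k x) UNIV h
              = - ((infsum (\<lambda>k. Dt k x) UNIV - sum (\<lambda>k. Dt k x) (I N)) h)"
          by (simp add: blinfun.diff_left blinfun.sum_left)
        then have "norm (sum (\<lambda>k. Dt k x h) (I N) - infsum (\<lambda>k. Dt k x) UNIV h)
              \<le> norm (infsum (\<lambda>k. Dt k x) UNIV - sum (\<lambda>k. Dt k x) (I N)) * norm h"
          by (simp only: norm_minus_cancel norm_blinfun)
        also have "\<dots> \<le> e * norm h"
          using tl[of x N] elim by (intro mult_right_mono) auto
        finally show "norm (sum (\<lambda>k. Dt k x h) (I N) - infsum (\<lambda>k. Dt k x) UNIV h) \<le> e * norm h" .
      qed
    qed
    show "(\<lambda>N. sum (\<lambda>k. t k 0) (I N)) \<longlonglongrightarrow> infsum (\<lambda>k. t k 0) UNIV" by (rule tlim)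
  qed simp
  then obtain g where g: "\<And>x. (\<lambda>N. sum (\<lambda>k. t k x) (I N)) \<longlonglongrightarrow> g x"
    "\<And>x. (g has_derivative blinfun_apply (infsum (\<lambda>k. Dt k x) UNIV)) (at x)" by auto
  have "g = (\<lambda>x. infsum (\<lambda>k. t k x) UNIV)"
    using LIMSEQ_unique[OF g(1) tlim] by auto
  then show "((\<lambda>x. infsum (\<lambda>k. t k x) UNIV) has_derivative blinfun_apply (infsum (\<lambda>k. Dt k x) UNIV)) (at x)" for x
    using g(2) by simp
  show "continuous_on UNIV (\<lambda>x. infsum (\<lambda>k. Dt k x) UNIV)"
  proof (rule uniform_limit_theorem[where f="\<lambda>N x. sum (\<lambda>k. Dt k x) (I N)" and F=sequentially])
    show "\<forall>\<^sub>F N in sequentially. continuous_on UNIV (\<lambda>x. sum (\<lambda>k. Dt k x) (I N))"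
      using cont by (intro always_eventually allI continuous_on_sum) auto
    show "uniform_limit UNIV (\<lambda>N x. sum (\<lambda>k. Dt k x) (I N)) (\<lambda>x. infsum (\<lambda>k. Dt k x) UNIV) sequentially"
      unfolding uniform_limit_iff
    proof (intro allI impI)
      fix e :: real assume e: "e > 0"
      show "\<forall>\<^sub>F N in sequentially. \<forall>x\<in>UNIV. dist (sum (\<lambda>k. Dt k x) (I N)) (infsum (\<lambda>k. Dt k x) UNIV) < e"
        using tz[OF e]
      proof eventually_elim
        case (elim N)
        then show ?case using tl by (auto simp: dist_norm norm_minus_commute intro: le_less_trans)
      qed
    qed
  qed simp
qed


lemma orbit_same: "orbit F n n z = z"
  by (simp add: orbit_def)

lemma orbit_step:
  assumes b: "\<And>k. bij (F k)"
  shows "orbit F (k + 1) n z = F k (orbit F k n z)"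
proof (cases "n \<le> k")
  case True
  have c1: "n \<le> k + 1" using True by simp
  have e: "nat (k + 1 - n) = Suc (nat (k - n))" using True by simp
  have e2: "n + int (nat (k - n)) = k" using True by simp
  have "orbit F (k + 1) n z = orbit_fwd F (Suc (nat (k - n))) n z"
    unfolding orbit_def if_P[OF c1] e ..
  also have "\<dots> = F k (orbit_fwd F (nat (k - n)) n z)"
    unfolding orbit_fwd.simps(2) e2 ..
  also have "\<dots> = F k (orbit F k n z)"
    unfolding orbit_def if_P[OF True] ..
  finally show ?thesis .
next
  case False
  then have k1: "k + 1 \<le> n" by simp
  have o1: "orbit F (k + 1) n z = orbit_bwd F (nat (n - (k + 1))) n z"
  proof (cases "k + 1 = n")
    case True
    have "orbit F (k + 1) n z = z" unfolding True orbit_def by simp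
    moreover have "nat (n - (k + 1)) = 0" using True by simp
    ultimately show ?thesis by simp
  next
    case False
    then have "\<not> n \<le> k + 1" using k1 by simp
    then show ?thesis unfolding orbit_def if_not_P[OF \<open>\<not> n \<le> k + 1\<close>] by simp
  qed
  have e: "nat (n - k) = Suc (nat (n - (k + 1)))" using k1 by simp
  have e2: "n - int (nat (n - (k + 1))) - 1 = k" using k1 by simp
  have "orbit F k n z = orbit_bwd F (Suc (nat (n - (k + 1)))) n z"
    unfolding orbit_def if_not_P[OF False] e ..
  also have "\<dots> = inv (F k) (orbit_bwd F (nat (n - (k + 1))) n z)"
    unfolding orbit_bwd.simps(2) e2 ..
  finally have "orbit F k n z = inv (F k) (orbit F (k + 1) n z)" unfolding o1 .
  then show ?thesis using b[of k] by (simp add: bij_is_surj surj_f_inv_f)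
qed

lemma orbit_unique:
  assumes inj: "\<And>k. inj (F k)"
    and u: "\<And>k. u (k + 1) = F k (u k)" and v: "\<And>k. v (k + 1) = F k (v k)"
    and un: "u (n::int) = v n"
  shows "u k = v k"
proof -
  have fw: "u (n + int j) = v (n + int j)" for j
  proof (induction j)
    case 0 then show ?case using un by simp
  next
    case (Suc j)
    have e: "n + int (Suc j) = n + int j + 1" by simp
    have "u (n + int (Suc j)) = F (n + int j) (u (n + int j))" unfolding e by (rule u)
    also have "\<dots> = F (n + int j) (v (n + int j))" using Suc by simp
    also have "\<dots> = v (n + int (Suc j))" unfolding e by (rule v[symmetric])
    finally show ?case .
  qed
  have bw: "u (n - int j) = v (n - int j)" for j
  proof (induction j)
    case 0 then show ?case using un by simp
  next
    case (Suc j)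
    have e: "n - int (Suc j) + 1 = n - int j" by simp
    have "F (n - int (Suc j)) (u (n - int (Suc j))) = u (n - int j)" using u[of "n - int (Suc j)"] unfolding e by simp
    also have "\<dots> = v (n - int j)" by (rule Suc)
    also have "\<dots> = F (n - int (Suc j)) (v (n - int (Suc j)))" using v[of "n - int (Suc j)"] unfolding e by simp
    finally show ?case using inj[of "n - int (Suc j)"] by (simp add: inj_eq)
  qed
  show ?thesis
  proof (cases "n \<le> k")
    case True
    then have "k = n + int (nat (k - n))" by simp
    then show ?thesis using fw[of "nat (k - n)"] by simp
  next
    case False
    then have "k = n - int (nat (n - k))" by simp
    then show ?thesis using bw[of "nat (n - k)"] by simp
  qed
qed

lemma int_induct_fw:
  assumes "P (n::int)" "\<And>k. n \<le> k \<Longrightarrow> P k \<Longrightarrow> P (k + 1)" "n \<le> k"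
  shows "P k"
proof -
  have "P (n + int j)" for j
  proof (induction j)
    case 0 then show ?case using assms by simp
  next
    case (Suc j)
    have e: "n + int (Suc j) = n + int j + 1" by simp
    show ?case unfolding e by (rule assms(2)[OF _ Suc]) simp
  qed
  moreover have "k = n + int (nat (k - n))" using assms(3) by simp
  ultimately show ?thesis by metis
qed

lemma int_induct_bw:
  assumes "P (n::int)" "\<And>k. k < n \<Longrightarrow> P (k + 1) \<Longrightarrow> P k" "k \<le> n"
  shows "P k"
proof -
  have "P (n - int j)" for j
  proof (induction j)
    case 0 then show ?case using assms by simp
  next
    case (Suc j)
    have e: "n - int (Suc j) + 1 = n - int j" by simp
    show ?case by (rule assms(2)) (use Suc e in simp_all)
  qed
  moreover have "k = n - int (nat (n - k))" using assms(3) by simp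
  ultimately show ?thesis by metis
qed


lemma homeo_bij: assumes "\<exists>g'. homeomorphism UNIV UNIV g g'" shows "bij g"
proof -
  obtain g' where h: "homeomorphism UNIV UNIV g g'" using assms by blast
  then have "\<And>x. g' (g x) = x" "\<And>y. g (g' y) = y" unfolding homeomorphism_def by auto
  then show ?thesis by (metis bijI injI surjI)
qed

lemma ivl_insert_top: "(n::int) \<le> k \<Longrightarrow> {n..<k + 1} = insert k {n..<k}" by auto
lemma ivl_insert_bot: "(k::int) < n \<Longrightarrow> {k..<n} = insert k {k + 1..<n}" by auto

locale sys =
  fixes A :: "int \<Rightarrow> ('a::banach \<Rightarrow>\<^sub>L 'a)"
    and f :: "int \<Rightarrow> 'a \<Rightarrow> 'b::banach \<Rightarrow> 'a"
    and g :: "int \<Rightarrow> 'b \<Rightarrow> 'b"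
    and \<gamma> :: "int \<Rightarrow> real"
  assumes A_inv: "\<forall>k. bl_invertible (A k)"
    and g_homeo: "\<forall>k. \<exists>g'. homeomorphism UNIV UNIV (g k) g'"
    and gnn: "\<forall>k. 0 \<le> \<gamma> k"
    and lip: "\<forall>k x1 x2 y. norm (f k x1 y - f k x2 y) \<le> \<gamma> k * norm (x1 - x2)"
    and BC4: "\<forall>k. norm (blinv (A k)) * \<gamma> k < 1"

context sys
begin

lemma g_bij: "bij (g k)" using g_homeo homeo_bij by blast

lemma hstep_lip: "norm (blinv (A k) (f k x1 y) - blinv (A k) (f k x2 y)) \<le> (norm (blinv (A k)) * \<gamma> k) * norm (x1 - x2)"
proof -
  have "norm (blinv (A k) (f k x1 y) - blinv (A k) (f k x2 y)) = norm (blinv (A k) (f k x1 y - f k x2 y))"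
    by (simp add: blinfun.diff_right)
  also have "\<dots> \<le> norm (blinv (A k)) * norm (f k x1 y - f k x2 y)" by (rule norm_blinfun)
  also have "\<dots> \<le> norm (blinv (A k)) * (\<gamma> k * norm (x1 - x2))"
    using lip by (intro mult_left_mono) auto
  finally show ?thesis by (simp add: mult.assoc)
qed

lemma hstep_c: "0 \<le> norm (blinv (A k)) * \<gamma> k" "norm (blinv (A k)) * \<gamma> k < 1"
  using gnn BC4 by auto

lemma blinv_step: "blinv (A k) (A k x + f k x y) = x + blinv (A k) (f k x y)"
  using blinv_apply[of "A k"] A_inv by (simp add: blinfun.add_right)

lemma T_bij: "bij (\<lambda>x. A k x + f k x y)"
proof -
  have b: "bij (\<lambda>x. x + blinv (A k) (f k x y))"
    by (rule pert_bij[OF hstep_c hstep_lip])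
  have bA: "bij (blinfun_apply (A k))"
    using blinv_apply[of "A k"] A_inv by (metis bijI injI surjI)
  have "(\<lambda>x. A k x + f k x y) = blinfun_apply (A k) \<circ> (\<lambda>x. x + blinv (A k) (f k x y))"
    using blinv_apply[of "A k"] A_inv by (auto simp: blinfun.add_right)
  then show ?thesis using bij_comp[OF b bA] by simp
qed

lemma coupled_bij: "bij (coupled_step A f g k)"
proof (rule bijI)
  show "inj (coupled_step A f g k)"
  proof (rule injI)
    fix p q assume e: "coupled_step A f g k p = coupled_step A f g k q"
    obtain x y x' y' where p: "p = (x, y)" and q: "q = (x', y')" by fastforce
    from e have "g k y = g k y'" by (simp add: coupled_step_def p q)
    then have yy: "y = y'" using g_bij[of k] by (simp add: bij_is_inj inj_eq)
    from e have "A k x + f k x y = A k x' + f k x' y" by (simp add: coupled_step_def p q yy)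
    moreover have "inj (\<lambda>x. A k x + f k x y)" using T_bij[of k y] bij_is_inj by blast
    ultimately have "x = x'" by (rule injD[rotated])
    then show "p = q" using p q yy by simp
  qed
  show "surj (coupled_step A f g k)"
  proof (rule surjI)
    fix pq :: "'a \<times> 'b"
    obtain u v where pq: "pq = (u, v)" by fastforce
    obtain y where y: "g k y = v" using g_bij[of k] unfolding bij_def surj_def by metis
    obtain x where x: "A k x + f k x y = u" using T_bij[of k y] unfolding bij_def surj_def by metis
    have "coupled_step A f g k (x, y) = pq" by (simp add: coupled_step_def pq x y)
    then show "coupled_step A f g k (SOME p. coupled_step A f g k p = pq) = pq" by (rule someI)
  qed
qed

lemma ysol_step: "ysol g (k + 1) n \<eta> = g k (ysol g k n \<eta>)"
  unfolding ysol_def by (rule orbit_step[OF g_bij])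

lemma snd_orbit: "snd (orbit (coupled_step A f g) k n (\<xi>, \<eta>)) = ysol g k n \<eta>"
proof (rule orbit_unique[where F=g and n=n and u="\<lambda>k. snd (orbit (coupled_step A f g) k n (\<xi>, \<eta>))" and v="\<lambda>k. ysol g k n \<eta>", simplified])
  show "inj (g k)" for k using g_bij bij_is_inj by blast
  show "snd (orbit (coupled_step A f g) (k + 1) n (\<xi>, \<eta>)) = g k (snd (orbit (coupled_step A f g) k n (\<xi>, \<eta>)))" for k
  proof -
    obtain x y where o: "orbit (coupled_step A f g) k n (\<xi>, \<eta>) = (x, y)" by fastforce
    show ?thesis unfolding orbit_step[OF coupled_bij] o by (simp add: coupled_step_def)
  qed
  show "ysol g (k + 1) n \<eta> = g k (ysol g k n \<eta>)" for k by (rule ysol_step)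
  show "snd (orbit (coupled_step A f g) n n (\<xi>, \<eta>)) = ysol g n n \<eta>"
    by (simp add: orbit_same ysol_def)
qed

lemma x2_step: "x2sol A f g (k + 1) n \<xi> \<eta> = A k (x2sol A f g k n \<xi> \<eta>) + f k (x2sol A f g k n \<xi> \<eta>) (ysol g k n \<eta>)"
proof -
  have "x2sol A f g (k + 1) n \<xi> \<eta> = fst (coupled_step A f g k (orbit (coupled_step A f g) k n (\<xi>, \<eta>)))"
    unfolding x2sol_def orbit_step[OF coupled_bij] ..
  also have "\<dots> = A k (x2sol A f g k n \<xi> \<eta>) + f k (x2sol A f g k n \<xi> \<eta>) (ysol g k n \<eta>)"
    using snd_orbit[of k n \<xi> \<eta>] unfolding x2sol_def
    by (cases "orbit (coupled_step A f g) k n (\<xi>, \<eta>)") (simp add: coupled_step_def)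
  finally show ?thesis .
qed

lemma x2_same: "x2sol A f g n n \<xi> \<eta> = \<xi>"
  by (simp add: x2sol_def orbit_same)

end


locale sysD = sys A f g \<gamma> for A :: "int \<Rightarrow> ('a::banach \<Rightarrow>\<^sub>L 'a)"
    and f :: "int \<Rightarrow> 'a \<Rightarrow> 'b::banach \<Rightarrow> 'a"
    and g :: "int \<Rightarrow> 'b \<Rightarrow> 'b"
    and \<gamma> :: "int \<Rightarrow> real" +
  fixes Df :: "int \<Rightarrow> 'b \<Rightarrow> 'a \<Rightarrow> ('a \<Rightarrow>\<^sub>L 'a)"
  assumes dF: "\<And>k y x. ((\<lambda>x. f k x y) has_derivative blinfun_apply (Df k y x)) (at x)"
    and contF: "\<And>k y. continuous_on UNIV (Df k y)"

context sysD
begin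

lemma Df_bound: "norm (Df k y x) \<le> \<gamma> k"
  by (rule deriv_lip_bound[OF dF]) (use lip gnn in auto)

definition cc :: "int \<Rightarrow> int \<Rightarrow> real" where
  "cc n k = (if n \<le> k then (\<Prod>j\<in>{n..<k}. norm (A j) + \<gamma> j)
     else (\<Prod>j\<in>{k..<n}. norm (blinv (A j)) / (1 - \<gamma> j * norm (blinv (A j)))))"

lemma x2_deriv:
  "\<exists>D. (\<forall>\<xi>. ((\<lambda>\<xi>. x2sol A f g k n \<xi> \<eta>) has_derivative blinfun_apply (D \<xi>)) (at \<xi>))
      \<and> continuous_on UNIV D \<and> (\<forall>\<xi>. norm (D \<xi>) \<le> cc n k)"
    (is "?P k")
proof -
  have base: "?P n"
  proof (intro exI[of _ "\<lambda>\<xi>. id_blinfun"] conjI allI)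
    fix \<xi>
    have "(\<lambda>\<xi>. x2sol A f g n n \<xi> \<eta>) = (\<lambda>\<xi>. \<xi>)" by (simp add: x2_same)
    moreover have "blinfun_apply id_blinfun = (\<lambda>x. x)" by (rule ext) simp
    ultimately show "((\<lambda>\<xi>. x2sol A f g n n \<xi> \<eta>) has_derivative blinfun_apply id_blinfun) (at \<xi>)"
      by (simp add: has_derivative_ident)
    show "norm (id_blinfun :: 'a \<Rightarrow>\<^sub>L 'a) \<le> cc n n" unfolding cc_def by (simp add: norm_blinfun_id_le)
  qed simp
  show ?thesis
  proof (cases "n \<le> k")
    case True
    show ?thesis
    proof (rule int_induct_fw[where P="?P", OF base _ True])
      fix k assume nk: "n \<le> k" and "?P k"
      then obtain D where dX: "\<And>\<xi>. ((\<lambda>\<xi>. x2sol A f g k n \<xi> \<eta>) has_derivative blinfun_apply (D \<xi>)) (at \<xi>)"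
        and cD: "continuous_on UNIV D" and nD: "\<And>\<xi>. norm (D \<xi>) \<le> cc n k" by blast
      define X where "X = (\<lambda>\<xi>. x2sol A f g k n \<xi> \<eta>)"
      define yk where "yk = ysol g k n \<eta>"
      have eX: "(\<lambda>\<xi>. x2sol A f g (k + 1) n \<xi> \<eta>) = (\<lambda>\<xi>. A k (X \<xi>) + f k (X \<xi>) yk)"
        unfolding X_def yk_def by (rule ext) (rule x2_step)
      have cX: "continuous_on UNIV X"
        unfolding X_def using dX has_derivative_continuous continuous_at_imp_continuous_on by blast
      have cDX: "continuous_on UNIV (\<lambda>\<xi>. Df k yk (X \<xi>))"
        by (rule continuous_on_compose2[OF contF cX]) auto
      show "?P (k + 1)"
      proof (intro exI[of _ "\<lambda>\<xi>. (A k + Df k yk (X \<xi>)) o\<^sub>L D \<xi>"] conjI allI)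
        fix \<xi>
        have "((\<lambda>\<xi>. A k (X \<xi>) + f k (X \<xi>) yk) has_derivative
               (\<lambda>v. A k (D \<xi> v) + Df k yk (X \<xi>) (D \<xi> v))) (at \<xi>)"
          unfolding X_def
          by (rule has_derivative_add[OF bounded_linear.has_derivative[OF blinfun.bounded_linear_right dX]
                has_derivative_compose[OF dX dF]])
        moreover have "(\<lambda>v. A k (D \<xi> v) + Df k yk (X \<xi>) (D \<xi> v)) = blinfun_apply ((A k + Df k yk (X \<xi>)) o\<^sub>L D \<xi>)"
          by (rule ext) (simp add: blinfun.add_left)
        ultimately show "((\<lambda>\<xi>. x2sol A f g (k + 1) n \<xi> \<eta>) has_derivative blinfun_apply ((A k + Df k yk (X \<xi>)) o\<^sub>L D \<xi>)) (at \<xi>)"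
          unfolding eX by simp
        have "norm ((A k + Df k yk (X \<xi>)) o\<^sub>L D \<xi>) \<le> norm (A k + Df k yk (X \<xi>)) * norm (D \<xi>)"
          by (rule norm_blinfun_compose)
        also have "\<dots> \<le> (norm (A k) + \<gamma> k) * cc n k"
        proof (rule mult_mono)
          show "norm (A k + Df k yk (X \<xi>)) \<le> norm (A k) + \<gamma> k"
            using norm_triangle_ineq[of "A k" "Df k yk (X \<xi>)"] Df_bound[of k yk "X \<xi>"] by linarith
          show "norm (D \<xi>) \<le> cc n k" by (rule nD)
          show "0 \<le> norm (A k) + \<gamma> k" using gnn by (simp add: add_nonneg_nonneg)
        qed simp
        also have "\<dots> = cc n (k + 1)"
          using nk unfolding cc_def by (simp add: ivl_insert_top)
        finally show "norm ((A k + Df k yk (X \<xi>)) o\<^sub>L D \<xi>) \<le> cc n (k + 1)" .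
      next
        show "continuous_on UNIV (\<lambda>\<xi>. (A k + Df k yk (X \<xi>)) o\<^sub>L D \<xi>)"
          using cDX cD by (intro continuous_intros)
      qed
    qed
  next
    case False
    then have kn: "k \<le> n" by simp
    show ?thesis
    proof (rule int_induct_bw[where P="?P", OF base _ kn])
      fix k assume nk: "k < n" and "?P (k + 1)"
      then obtain D where dX: "\<And>\<xi>. ((\<lambda>\<xi>. x2sol A f g (k + 1) n \<xi> \<eta>) has_derivative blinfun_apply (D \<xi>)) (at \<xi>)"
        and cD: "continuous_on UNIV D" and nD: "\<And>\<xi>. norm (D \<xi>) \<le> cc n (k + 1)" by blast
      define X where "X = (\<lambda>\<xi>. x2sol A f g (k + 1) n \<xi> \<eta>)"
      define yk where "yk = ysol g k n \<eta>"
      define B where "B = blinv (A k)"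
      define c where "c = norm B * \<gamma> k"
      define h where "h = (\<lambda>x. B (f k x yk))"
      define Dh where "Dh = (\<lambda>x. B o\<^sub>L Df k yk x)"
      define G where "G = inv (\<lambda>x. x + h x)"
      have c1: "c < 1" unfolding c_def B_def using BC4 by auto
      have dh: "(h has_derivative blinfun_apply (Dh x)) (at x)" for x
        unfolding h_def Dh_def blinfun_apply_blinfun_compose
        by (rule bounded_linear.has_derivative[OF blinfun.bounded_linear_right dF])
      have nDh: "norm (Dh x) \<le> c" for x
      proof -
        have "norm (Dh x) \<le> norm B * norm (Df k yk x)" unfolding Dh_def by (rule norm_blinfun_compose)
        also have "\<dots> \<le> norm B * \<gamma> k" using Df_bound by (intro mult_left_mono) auto
        finally show ?thesis unfolding c_def .
      qed
      have cDh: "continuous_on UNIV Dh" unfolding Dh_def using contF by (intro continuous_intros)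
      note PD = pert_deriv[OF c1 dh nDh cDh, folded G_def]
      have eX: "(\<lambda>\<xi>. x2sol A f g k n \<xi> \<eta>) = (\<lambda>\<xi>. G (B (X \<xi>)))"
      proof (rule ext)
        fix \<xi>
        have "B (X \<xi>) = x2sol A f g k n \<xi> \<eta> + h (x2sol A f g k n \<xi> \<eta>)"
          unfolding X_def x2_step B_def h_def yk_def by (rule blinv_step)
        then show "x2sol A f g k n \<xi> \<eta> = G (B (X \<xi>))" using PD(5) by simp
      qed
      have cX: "continuous_on UNIV X"
        unfolding X_def using dX has_derivative_continuous continuous_at_imp_continuous_on by blast
      define E where "E = (\<lambda>z. blinv (id_blinfun + Dh (G z)))"
      have cE: "continuous_on UNIV (\<lambda>\<xi>. E (B (X \<xi>)))"
        unfolding E_def by (rule continuous_on_compose2[OF PD(2)]) (use cX in \<open>auto intro!: continuous_intros\<close>)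
      show "?P k"
      proof (intro exI[of _ "\<lambda>\<xi>. E (B (X \<xi>)) o\<^sub>L B o\<^sub>L D \<xi>"] conjI allI)
        fix \<xi>
        have "((\<lambda>\<xi>. G (B (X \<xi>))) has_derivative (\<lambda>v. E (B (X \<xi>)) (B (D \<xi> v)))) (at \<xi>)"
          unfolding E_def
          by (rule has_derivative_compose[OF bounded_linear.has_derivative[OF blinfun.bounded_linear_right dX[folded X_def]] PD(1)])
        moreover have "blinfun_apply (E (B (X \<xi>)) o\<^sub>L B o\<^sub>L D \<xi>) = (\<lambda>v. E (B (X \<xi>)) (B (D \<xi> v)))"
          by (rule ext) simp
        ultimately show "((\<lambda>\<xi>. x2sol A f g k n \<xi> \<eta>) has_derivative blinfun_apply (E (B (X \<xi>)) o\<^sub>L B o\<^sub>L D \<xi>)) (at \<xi>)"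
          unfolding eX by simp
        have "norm (E (B (X \<xi>)) o\<^sub>L B o\<^sub>L D \<xi>) \<le> norm (E (B (X \<xi>)) o\<^sub>L B) * norm (D \<xi>)"
          by (rule norm_blinfun_compose)
        also have "\<dots> \<le> (norm (E (B (X \<xi>))) * norm B) * norm (D \<xi>)"
          by (intro mult_right_mono norm_blinfun_compose norm_ge_zero)
        also have "\<dots> \<le> (1 / (1 - c) * norm B) * cc n (k + 1)"
          using PD(3) nD c1 by (intro mult_mono) (auto simp: E_def)
        also have "\<dots> = cc n k"
        proof -
          have "cc n (k + 1) = (\<Prod>j\<in>{k + 1..<n}. norm (blinv (A j)) / (1 - \<gamma> j * norm (blinv (A j))))"
            using nk unfolding cc_def by auto
          then show ?thesis using nk unfolding cc_def
            by (simp add: ivl_insert_bot[OF nk] c_def B_def mult.commute)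
        qed
        finally show "norm (E (B (X \<xi>)) o\<^sub>L B o\<^sub>L D \<xi>) \<le> cc n k" .
      next
        show "continuous_on UNIV (\<lambda>\<xi>. E (B (X \<xi>)) o\<^sub>L B o\<^sub>L D \<xi>)"
          using cE cD by (intro continuous_intros)
      qed
    qed
  qed
qed

end


theorem mainTheorem3:
  fixes A P :: "int \<Rightarrow> ('a::banach \<Rightarrow>\<^sub>L 'a)"
    and f :: "int \<Rightarrow> 'a \<Rightarrow> 'b::banach \<Rightarrow> 'a"
    and g :: "int \<Rightarrow> 'b \<Rightarrow> 'b"
    and \<mu> \<gamma> :: "int \<Rightarrow> real"
    and n :: int
  assumes A_inv: "\<forall>k. bl_invertible (A k)"
    and g_homeo: "\<forall>k. \<exists>g'. homeomorphism UNIV UNIV (g k) g'"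
    and BC1_nonneg: "\<forall>k. 0 \<le> \<mu> k \<and> 0 \<le> \<gamma> k"
    and BC1_bound: "\<forall>k x y. norm (f k x y) \<le> \<mu> k"
    and BC1_lip: "\<forall>k x1 x2 y. norm (f k x1 y - f k x2 y) \<le> \<gamma> k * norm (x1 - x2)"
    and BC2: "(SUP m. \<Sum>\<^sub>\<infinity>k\<in>(UNIV::int set). ennreal (norm (green A P m k) * \<mu> (k - 1))) < \<infinity>"
    and BC3: "(SUP m. \<Sum>\<^sub>\<infinity>k\<in>(UNIV::int set). ennreal (norm (green A P m k) * \<gamma> (k - 1))) < 1"
    and BC4: "\<forall>k. norm (blinv (A k)) * \<gamma> k < 1"
    and AC1: "\<forall>k y. C1_map (\<lambda>x. f k x y)"
    and cond: "Kconst A P \<gamma> n + Jconst A P \<gamma> n + ennreal (norm (green A P n (n + 1)) * \<gamma> n) < 1"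
  shows "\<forall>\<eta>. C1_map (\<lambda>\<xi>. Hconj A P f g n (\<xi>, \<eta>))"
proof
  fix \<eta> :: 'b
  interpret sys A f g \<gamma>
    by unfold_locales (use A_inv g_homeo BC1_nonneg BC1_lip BC4 in auto)
  have "\<forall>p. \<exists>D. (\<forall>x. ((\<lambda>x. f (fst p) x (snd p)) has_derivative blinfun_apply (D x)) (at x)) \<and> continuous_on UNIV D"
    using AC1 unfolding C1_map_def by blast
  then obtain DD where DD: "\<And>p x. ((\<lambda>x. f (fst p) x (snd p)) has_derivative blinfun_apply (DD p x)) (at x)"
    "\<And>p. continuous_on UNIV (DD p)" by metis
  define Df where "Df k y = DD (k, y)" for k y
  interpret sysD A f g \<gamma> Df
    by unfold_locales (use DD in \<open>auto simp: Df_def\<close>)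
  have "\<forall>k. \<exists>D. (\<forall>\<xi>. ((\<lambda>\<xi>. x2sol A f g k n \<xi> \<eta>) has_derivative blinfun_apply (D \<xi>)) (at \<xi>))
      \<and> continuous_on UNIV D \<and> (\<forall>\<xi>. norm (D \<xi>) \<le> cc n k)"
    using x2_deriv by blast
  then obtain DX where dX: "\<And>k \<xi>. ((\<lambda>\<xi>. x2sol A f g k n \<xi> \<eta>) has_derivative blinfun_apply (DX k \<xi>)) (at \<xi>)"
    and cDX: "\<And>k. continuous_on UNIV (DX k)" and nDX: "\<And>k \<xi>. norm (DX k \<xi>) \<le> cc n k" by metis
  define X where "X k \<xi> = x2sol A f g k n \<xi> \<eta>" for k \<xi>
  define yk where "yk k = ysol g k n \<eta>" for k
  define t where "t k \<xi> = green A P n (k + 1) (f k (X k \<xi>) (yk k))" for k \<xi>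
  define Dt where "Dt k \<xi> = green A P n (k + 1) o\<^sub>L Df k (yk k) (X k \<xi>) o\<^sub>L DX k \<xi>" for k \<xi>
  define M where "M k = norm (green A P n (k + 1)) * \<mu> k" for k
  define b where "b k = norm (green A P n (k + 1)) * \<gamma> k * cc n k" for k
  have cX: "continuous_on UNIV (X k)" for k
    unfolding X_def using dX has_derivative_continuous continuous_at_imp_continuous_on by blast
  have dt: "(t k has_derivative blinfun_apply (Dt k \<xi>)) (at \<xi>)" for k \<xi>
  proof -
    have "((\<lambda>\<xi>. green A P n (k + 1) (f k (X k \<xi>) (yk k))) has_derivative
           (\<lambda>v. green A P n (k + 1) (Df k (yk k) (X k \<xi>) (DX k \<xi> v)))) (at \<xi>)"
      unfolding X_def
      by (rule bounded_linear.has_derivative[OF blinfun.bounded_linear_right has_derivative_compose[OF dX dF]])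
    moreover have "blinfun_apply (Dt k \<xi>) = (\<lambda>v. green A P n (k + 1) (Df k (yk k) (X k \<xi>) (DX k \<xi> v)))"
      unfolding Dt_def by (rule ext) simp
    ultimately show ?thesis unfolding t_def by simp
  qed
  have tb: "norm (t k \<xi>) \<le> M k" for k \<xi>
  proof -
    have "norm (t k \<xi>) \<le> norm (green A P n (k + 1)) * norm (f k (X k \<xi>) (yk k))"
      unfolding t_def by (rule norm_blinfun)
    also have "\<dots> \<le> norm (green A P n (k + 1)) * \<mu> k"
      using BC1_bound by (intro mult_left_mono) auto
    finally show ?thesis unfolding M_def .
  qed
  have ccnn: "0 \<le> cc n k" for k
  proof -
    have "0 \<le> norm (blinv (A j)) / (1 - \<gamma> j * norm (blinv (A j)))" for j
      using BC4[rule_format, of j] by (simp add: mult.commute)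
    moreover have "0 \<le> norm (A j) + \<gamma> j" for j using BC1_nonneg by (simp add: add_nonneg_nonneg)
    ultimately show ?thesis unfolding cc_def by (auto intro!: prod_nonneg)
  qed
  have Db: "norm (Dt k \<xi>) \<le> b k" for k \<xi>
  proof -
    have "norm (Dt k \<xi>) \<le> norm (green A P n (k + 1) o\<^sub>L Df k (yk k) (X k \<xi>)) * norm (DX k \<xi>)"
      unfolding Dt_def by (rule norm_blinfun_compose)
    also have "\<dots> \<le> (norm (green A P n (k + 1)) * norm (Df k (yk k) (X k \<xi>))) * norm (DX k \<xi>)"
      by (intro mult_right_mono norm_blinfun_compose norm_ge_zero)
    also have "\<dots> \<le> (norm (green A P n (k + 1)) * \<gamma> k) * cc n k"
      using Df_bound nDX BC1_nonneg by (intro mult_mono mult_left_mono) auto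
    finally show ?thesis unfolding b_def .
  qed
  have cDt: "continuous_on UNIV (Dt k)" for k
  proof -
    have "continuous_on UNIV (\<lambda>\<xi>. Df k (yk k) (X k \<xi>))"
      by (rule continuous_on_compose2[OF contF cX]) auto
    then show ?thesis unfolding Dt_def using cDX by (intro continuous_intros)
  qed
  have Ms: "M summable_on UNIV"
  proof (rule ennreal_infsum_finite(1))
    show "0 \<le> M k" for k unfolding M_def using BC1_nonneg by simp
    have "(\<Sum>\<^sub>\<infinity>k\<in>(UNIV::int set). ennreal (norm (green A P n k) * \<mu> (k - 1)))
          \<le> (SUP m. \<Sum>\<^sub>\<infinity>k\<in>(UNIV::int set). ennreal (norm (green A P m k) * \<mu> (k - 1)))"
      by (rule SUP_upper) simp
    also have "\<dots> < top" using BC2 by simp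
    finally have fin: "(\<Sum>\<^sub>\<infinity>k\<in>(UNIV::int set). ennreal (norm (green A P n k) * \<mu> (k - 1))) < top" .
    have su: "(\<lambda>k::int. k + 1) ` UNIV = UNIV"
      by (metis surj_def add_diff_cancel diff_add_cancel)
    have "(\<Sum>\<^sub>\<infinity>k\<in>(UNIV::int set). ennreal (norm (green A P n k) * \<mu> (k - 1)))
          = (\<Sum>\<^sub>\<infinity>k\<in>(\<lambda>k::int. k + 1) ` UNIV. ennreal (norm (green A P n k) * \<mu> (k - 1)))"
      unfolding su ..
    also have "\<dots> = (\<Sum>\<^sub>\<infinity>k\<in>UNIV. ennreal (M k))"
      by (subst infsum_reindex) (auto simp: M_def comp_def)
    finally show "(\<Sum>\<^sub>\<infinity>k\<in>UNIV. ennreal (M k)) < top" using fin by simp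
  qed
  have bsplit: "(\<Sum>\<^sub>\<infinity>k\<in>UNIV. ennreal (b k)) = Kconst A P \<gamma> n + Jconst A P \<gamma> n + ennreal (norm (green A P n (n + 1)) * \<gamma> n)"
  proof -
    have U: "(UNIV::int set) = {..<n} \<union> ({n<..} \<union> {n})" by auto
    have "(\<Sum>\<^sub>\<infinity>k\<in>UNIV. ennreal (b k)) = (\<Sum>\<^sub>\<infinity>k\<in>{..<n}. ennreal (b k)) + ((\<Sum>\<^sub>\<infinity>k\<in>{n<..}. ennreal (b k)) + (\<Sum>\<^sub>\<infinity>k\<in>{n}. ennreal (b k)))"
    proof -
      have 1: "(\<Sum>\<^sub>\<infinity>k\<in>{..<n} \<union> ({n<..} \<union> {n}). ennreal (b k)) = (\<Sum>\<^sub>\<infinity>k\<in>{..<n}. ennreal (b k)) + (\<Sum>\<^sub>\<infinity>k\<in>{n<..} \<union> {n}. ennreal (b k))"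
        by (rule infsum_Un_disjoint) (auto intro: nonneg_summable_on_complete)
      have 2: "(\<Sum>\<^sub>\<infinity>k\<in>{n<..} \<union> {n}. ennreal (b k)) = (\<Sum>\<^sub>\<infinity>k\<in>{n<..}. ennreal (b k)) + (\<Sum>\<^sub>\<infinity>k\<in>{n}. ennreal (b k))"
        by (rule infsum_Un_disjoint) (auto intro: nonneg_summable_on_complete)
      show ?thesis unfolding U 1 2 ..
    qed
    also have "(\<Sum>\<^sub>\<infinity>k\<in>{..<n}. ennreal (b k)) = Kconst A P \<gamma> n"
      unfolding Kconst_def by (rule infsum_cong) (simp add: b_def cc_def)
    also have "(\<Sum>\<^sub>\<infinity>k\<in>{n<..}. ennreal (b k)) = Jconst A P \<gamma> n"
      unfolding Jconst_def by (rule infsum_cong) (simp add: b_def cc_def)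
    also have "(\<Sum>\<^sub>\<infinity>k\<in>{n}. ennreal (b k)) = ennreal (norm (green A P n (n + 1)) * \<gamma> n)"
      by (simp add: b_def cc_def)
    finally show ?thesis by (simp add: add.assoc)
  qed
  have bnn: "0 \<le> b k" for k unfolding b_def using BC1_nonneg ccnn by simp
  have bl1: "(\<Sum>\<^sub>\<infinity>k\<in>UNIV. ennreal (b k)) < 1" using cond bsplit by simp
  have "(1::ennreal) < top" by (metis ennreal_1 ennreal_less_top)
  with bl1 have bfin: "(\<Sum>\<^sub>\<infinity>k\<in>UNIV. ennreal (b k)) < top" by (rule order.strict_trans)
  have bs: "b summable_on UNIV" by (rule ennreal_infsum_finite(1)[OF bnn bfin])
  have "ennreal (infsum b UNIV) < 1"
    using ennreal_infsum_finite(2)[OF bnn bfin] bsplit cond by simp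
  then have b1: "infsum b UNIV < 1" by simp
  note SD = series_deriv[OF dt tb Ms Db bs cDt]
  define h where "h \<xi> = - infsum (\<lambda>k. t k \<xi>) UNIV" for \<xi>
  define Dh where "Dh \<xi> = - infsum (\<lambda>k. Dt k \<xi>) UNIV" for \<xi>
  have dh: "(h has_derivative blinfun_apply (Dh \<xi>)) (at \<xi>)" for \<xi>
  proof -
    have "(h has_derivative (\<lambda>v. - blinfun_apply (infsum (\<lambda>k. Dt k \<xi>) UNIV) v)) (at \<xi>)"
      unfolding h_def by (rule has_derivative_minus[OF SD(1)])
    moreover have "blinfun_apply (Dh \<xi>) = (\<lambda>v. - blinfun_apply (infsum (\<lambda>k. Dt k \<xi>) UNIV) v)"
      unfolding Dh_def by (rule ext) (simp add: blinfun.minus_left)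
    ultimately show ?thesis by simp
  qed
  have nDh: "norm (Dh \<xi>) \<le> infsum b UNIV" for \<xi> unfolding Dh_def using SD(3) by simp
  have cDh: "continuous_on UNIV Dh" unfolding Dh_def using SD(2) by (intro continuous_intros)
  define G where "G = inv (\<lambda>x. x + h x)"
  note PD = pert_deriv[OF b1 dh nDh cDh, folded G_def]
  have hb: "hbar A P f g n (x, \<eta>) = h x" for x
    unfolding hbar_def h_def t_def X_def yk_def by simp
  have HC: "Hconj A P f g n (\<xi>, \<eta>) = (G \<xi>, \<eta>)" for \<xi>
    unfolding Hconj_def inv_into_def2
  proof (rule some_equality)
    show "(G \<xi>, \<eta>) \<in> UNIV \<and> Hbar A P f g n (G \<xi>, \<eta>) = (\<xi>, \<eta>)"
      using PD(4) by (simp add: Hbar_def hb)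
    fix p assume "p \<in> UNIV \<and> Hbar A P f g n p = (\<xi>, \<eta>)"
    then obtain x y where p: "p = (x, y)" and e: "Hbar A P f g n (x, y) = (\<xi>, \<eta>)" by (cases p) auto
    then have y: "y = \<eta>" by (simp add: Hbar_def)
    with e have "x + h x = \<xi>" by (simp add: Hbar_def hb)
    then have "x = G \<xi>" using PD(5)[of x] by simp
    then show "p = (G \<xi>, \<eta>)" using p y by simp
  qed
  define E where "E z = blinv (id_blinfun + Dh (G z))" for z
  have blJ: "bounded_linear (\<lambda>x::'a. (x, 0::'b))"
    by (intro bounded_linear_Pair bounded_linear_ident bounded_linear_zero)
  define J where "J = (Blinfun (\<lambda>x::'a. (x, 0::'b)))"
  have Japp: "blinfun_apply J = (\<lambda>x. (x, 0))" unfolding J_def by (rule bounded_linear_Blinfun_apply[OF blJ])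
  show "C1_map (\<lambda>\<xi>. Hconj A P f g n (\<xi>, \<eta>))"
    unfolding C1_map_def HC
  proof (intro exI[of _ "\<lambda>\<xi>. J o\<^sub>L E \<xi>"] conjI allI)
    fix \<xi>
    have "((\<lambda>\<xi>. (G \<xi>, \<eta>)) has_derivative (\<lambda>v. (E \<xi> v, 0))) (at \<xi>)"
      unfolding E_def by (rule has_derivative_Pair[OF PD(1) has_derivative_const])
    moreover have "blinfun_apply (J o\<^sub>L E \<xi>) = (\<lambda>v. (E \<xi> v, 0))" by (rule ext) (simp add: Japp)
    ultimately show "((\<lambda>\<xi>. (G \<xi>, \<eta>)) has_derivative blinfun_apply (J o\<^sub>L E \<xi>)) (at \<xi>)" by simp
  next
    show "continuous_on UNIV (\<lambda>\<xi>. J o\<^sub>L E \<xi>)"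
      using PD(2) unfolding E_def by (intro continuous_intros)
  qed
qed


end
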